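(* Let $a,b,c\in\mathbb{C}$ with $|a|\le1$, let $\psi=K_c$, i.e. $\psi(z)=e^{\bar c z}$, and $\varphi(z)=az+b$, and suppose that $C_{\psi,\varphi}$ is bounded on $\mathcal{F}^2$. (a) If $|a|<1$, then $\|C_{\psi,\varphi}\|=\left|e^{\frac{\bar c b}{1-a}}\right|\exp\!\left(\frac12\,\frac{\left|\frac{c(1-a)}{\bar a-1}+b\right|^2}{1-|a|^2}\right)$. (b) If $|a|=1$ and $a\neq1$, then $\|C_{\psi,\varphi}\|=\left|e^{\frac{|b|^2}{1-\bar a}}\right|$. (c) If $a=1$, then $\|C_{\psi,\varphi}\|=e^{\frac{|b|^2}{2}}$.
   Context: $\mathcal{F}^2$ is the Fock space: the Hilbert space of entire functions $f$ on $\mathbb{C}$ with $\int_{\mathbb{C}}|f(z)|^2\,d\mu(z)<\infty$, where $d\mu(z)=\pi^{-1}e^{-|z|^2}\,dA(z)$, with inner product $\langle f,g\rangle=\int f\overline{g}\,d\mu$. Its reproducing kernel at $w$ is $K_w(z)=e^{\bar w z}$. The weighted composition operator is $C_{\psi,\varphi}f=\psi\cdot(f\circ\varphi)$. *)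

theory Defs
  imports "HOL-Analysis.Analysis"
begin

definition fock_nn :: "(complex \<Rightarrow> complex) \<Rightarrow> ennreal" where
  "fock_nn f = (\<integral>\<^sup>+ z. ennreal ((cmod (f z))\<^sup>2 * exp (- (cmod z)\<^sup>2) / pi) \<partial>lborel)"

definition fock_space :: "(complex \<Rightarrow> complex) set" where
  "fock_space = {f. f holomorphic_on UNIV \<and> fock_nn f < \<infinity>}"

definition fock_norm :: "(complex \<Rightarrow> complex) \<Rightarrow> real" where
  "fock_norm f = sqrt (enn2real (fock_nn f))"

definition fock_kernel :: "complex \<Rightarrow> complex \<Rightarrow> complex" where
  "fock_kernel w = (\<lambda>z. exp (cnj w * z))"

definition wcomp :: "(complex \<Rightarrow> complex) \<Rightarrow> (complex \<Rightarrow> complex) \<Rightarrow>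
    (complex \<Rightarrow> complex) \<Rightarrow> (complex \<Rightarrow> complex)" where
  "wcomp \<psi> \<phi> f = (\<lambda>z. \<psi> z * f (\<phi> z))"

definition fock_bounded :: "((complex \<Rightarrow> complex) \<Rightarrow> (complex \<Rightarrow> complex)) \<Rightarrow> bool" where
  "fock_bounded T \<longleftrightarrow> (\<forall>f\<in>fock_space. T f \<in> fock_space) \<and>
     (\<exists>M. \<forall>f\<in>fock_space. fock_norm (T f) \<le> M * fock_norm f)"

definition fock_op_norm :: "((complex \<Rightarrow> complex) \<Rightarrow> (complex \<Rightarrow> complex)) \<Rightarrow> real" where
  "fock_op_norm T = Sup {fock_norm (T f) | f. f \<in> fock_space \<and> fock_norm f \<le> 1}"

end

theory Submission
  imports Defs "HOL-Probability.Probability" "HOL-Complex_Analysis.Complex_Analysis"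
begin


lemma lborel_complex_eq:
  "(lborel::complex measure) = distr (lborel::(real\<times>real) measure) borel (\<lambda>p. Complex (fst p) (snd p))"
proof (rule lborel_eqI)
  fix l u :: complex assume le: "\<And>b. b \<in> Basis \<Longrightarrow> l \<bullet> b \<le> u \<bullet> b"
  have meas: "(\<lambda>p. Complex (fst p) (snd p)) \<in> borel_measurable (lborel::(real\<times>real) measure)"
    unfolding measurable_lborel2 by (intro borel_measurable_continuous_onI) (simp add: Complex_eq, intro continuous_intros)
  have pre: "(\<lambda>p. Complex (fst p) (snd p)) -` box l u = box (Re l, Im l) (Re u, Im u)"
    by (auto simp: box_def Basis_complex_def Basis_prod_def inner_complex_def)
  have "emeasure (distr (lborel::(real\<times>real) measure) borel (\<lambda>p. Complex (fst p) (snd p))) (box l u)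
      = emeasure lborel (box (Re l, Im l) (Re u, Im u))"
    using meas by (subst emeasure_distr) (auto simp: pre)
  also have "\<dots> = (\<Prod>b\<in>Basis. (u - l) \<bullet> b)"
    using le[of 1] le[of \<i>]
    by (simp add: emeasure_lborel_box_eq Basis_complex_def Basis_prod_def inner_complex_def ennreal_mult mult.commute)
  finally show "emeasure (distr (lborel::(real\<times>real) measure) borel (\<lambda>p. Complex (fst p) (snd p))) (box l u) = (\<Prod>b\<in>Basis. (u - l) \<bullet> b)" .
qed simp

lemma borel_complex_pair:
  "(\<lambda>p. Complex (fst p) (snd p)) \<in> borel_measurable (borel::(real\<times>real) measure)"
  by (intro borel_measurable_continuous_onI) (simp add: Complex_eq, intro continuous_intros)

lemma nn_integral_complex_fst:
  fixes F :: "complex \<Rightarrow> ennreal"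
  assumes F[measurable]: "F \<in> borel_measurable borel"
  shows "(\<integral>\<^sup>+z. F z \<partial>lborel) = (\<integral>\<^sup>+x. \<integral>\<^sup>+y. F (Complex x y) \<partial>lborel \<partial>lborel)"
proof -
  have m: "(\<lambda>p. F (Complex (fst p) (snd p))) \<in> borel_measurable (lborel \<Otimes>\<^sub>M lborel)"
    using measurable_comp[OF borel_complex_pair F] by (simp add: lborel_prod o_def)
  have "(\<integral>\<^sup>+z. F z \<partial>lborel) = (\<integral>\<^sup>+p. F (Complex (fst p) (snd p)) \<partial>(lborel::(real\<times>real) measure))"
    by (subst lborel_complex_eq) (simp add: nn_integral_distr borel_complex_pair)
  also have "\<dots> = (\<integral>\<^sup>+p. F (Complex (fst p) (snd p)) \<partial>(lborel \<Otimes>\<^sub>M lborel))"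
    by (simp add: lborel_prod)
  also have "\<dots> = (\<integral>\<^sup>+x. \<integral>\<^sup>+y. F (Complex x y) \<partial>lborel \<partial>lborel)"
    using lborel.nn_integral_fst[OF m] by simp
  finally show ?thesis .
qed

lemma nn_integral_complex_snd:
  fixes F :: "complex \<Rightarrow> ennreal"
  assumes F[measurable]: "F \<in> borel_measurable borel"
  shows "(\<integral>\<^sup>+z. F z \<partial>lborel) = (\<integral>\<^sup>+y. \<integral>\<^sup>+x. F (Complex x y) \<partial>lborel \<partial>lborel)"
proof -
  have m: "(\<lambda>(x,y). F (Complex x y)) \<in> borel_measurable (lborel \<Otimes>\<^sub>M lborel)"
    using measurable_comp[OF borel_complex_pair F] by (simp add: lborel_prod o_def case_prod_beta')
  show ?thesis
    unfolding nn_integral_complex_fst[OF F] using lborel_pair.Fubini'[OF m] by simp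
qed

lemma nn_integral_shear_x:
  fixes F :: "complex \<Rightarrow> ennreal"
  assumes F[measurable]: "F \<in> borel_measurable borel"
  shows "(\<integral>\<^sup>+z. F (z + of_real (k * Im z)) \<partial>lborel) = (\<integral>\<^sup>+z. F z \<partial>lborel)"
proof -
  have G: "(\<lambda>z. F (z + of_real (k * Im z))) \<in> borel_measurable borel"
    by measurable
  have "(\<integral>\<^sup>+z. F (z + of_real (k * Im z)) \<partial>lborel) = (\<integral>\<^sup>+y. \<integral>\<^sup>+x. F (Complex (k*y + 1*x) y) \<partial>lborel \<partial>lborel)"
    unfolding nn_integral_complex_snd[OF G] by (simp add: Complex_eq algebra_simps)
  also have "\<dots> = (\<integral>\<^sup>+y. \<integral>\<^sup>+x. F (Complex x y) \<partial>lborel \<partial>lborel)"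
  proof (rule nn_integral_cong)
    fix y :: real
    have m: "(\<lambda>x. F (Complex x y)) \<in> borel_measurable borel"
      using measurable_comp[OF _ F, of "\<lambda>x. Complex x y"]
      by (simp add: o_def Complex_eq borel_measurable_continuous_onI continuous_intros)
    show "(\<integral>\<^sup>+x. F (Complex (k*y + 1*x) y) \<partial>lborel) = (\<integral>\<^sup>+x. F (Complex x y) \<partial>lborel)"
      using nn_integral_real_affine[OF m, of 1 "k*y"] by simp
  qed
  also have "\<dots> = (\<integral>\<^sup>+z. F z \<partial>lborel)"
    by (rule nn_integral_complex_snd[OF F, symmetric])
  finally show ?thesis .
qed

lemma nn_integral_shear_y:
  fixes F :: "complex \<Rightarrow> ennreal"
  assumes F[measurable]: "F \<in> borel_measurable borel"
  shows "(\<integral>\<^sup>+z. F (z + \<i> * of_real (k * Re z)) \<partial>lborel) = (\<integral>\<^sup>+z. F z \<partial>lborel)"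
proof -
  have G: "(\<lambda>z. F (z + \<i> * of_real (k * Re z))) \<in> borel_measurable borel"
    by measurable
  have "(\<integral>\<^sup>+z. F (z + \<i> * of_real (k * Re z)) \<partial>lborel) = (\<integral>\<^sup>+x. \<integral>\<^sup>+y. F (Complex x (k*x + 1*y)) \<partial>lborel \<partial>lborel)"
    unfolding nn_integral_complex_fst[OF G] by (simp add: Complex_eq algebra_simps)
  also have "\<dots> = (\<integral>\<^sup>+x. \<integral>\<^sup>+y. F (Complex x y) \<partial>lborel \<partial>lborel)"
  proof (rule nn_integral_cong)
    fix x :: real
    have m: "(\<lambda>y. F (Complex x y)) \<in> borel_measurable borel"
      using measurable_comp[OF _ F, of "\<lambda>y. Complex x y"]
      by (simp add: o_def Complex_eq borel_measurable_continuous_onI continuous_intros)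
    show "(\<integral>\<^sup>+y. F (Complex x (k*x + 1*y)) \<partial>lborel) = (\<integral>\<^sup>+y. F (Complex x y) \<partial>lborel)"
      using nn_integral_real_affine[OF m, of 1 "k*x"] by simp
  qed
  also have "\<dots> = (\<integral>\<^sup>+z. F z \<partial>lborel)"
    by (rule nn_integral_complex_fst[OF F, symmetric])
  finally show ?thesis .
qed

lemma nn_integral_rot:
  fixes F :: "complex \<Rightarrow> ennreal"
  assumes F[measurable]: "F \<in> borel_measurable borel" and w: "cmod w = 1"
  shows "(\<integral>\<^sup>+z. F (w * z) \<partial>lborel) = (\<integral>\<^sup>+z. F z \<partial>lborel)"
proof (cases "Im w = 0")
  case True
  have "\<bar>Re w\<bar> = 1" using w True by (simp add: cmod_def)
  then have "Re w = 1 \<or> Re w = -1" by arith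
  then have "w = 1 \<or> w = -1" using True by (auto simp: complex_eq_iff)
  then show ?thesis
  proof
    assume "w = 1" then show ?thesis by simp
  next
    assume w1: "w = -1"
    have "(\<integral>\<^sup>+z. F z \<partial>lborel) = (\<integral>\<^sup>+z. F z \<partial>density (distr lborel borel (\<lambda>x. 0 + (-1) *\<^sub>R x)) (\<lambda>_. \<bar>-1::real\<bar>^DIM(complex)))"
      by (subst lborel_affine[symmetric]) auto
    also have "\<dots> = (\<integral>\<^sup>+z. F (- z) \<partial>lborel)"
      by (simp add: nn_integral_density nn_integral_distr)
    finally show ?thesis using w1 by simp
  qed
next
  case False
  define p where "p = Re w"
  define q where "q = Im w"
  have pq: "p\<^sup>2 + q\<^sup>2 = 1" using w by (simp add: p_def q_def cmod_def)
  have q0: "q \<noteq> 0" using False by (simp add: q_def)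
  define al where "al = (p - 1) / q"
  define shx where "shx = (\<lambda>z. z + of_real (al * Im z))"
  define shy where "shy = (\<lambda>z. z + \<i> * of_real (q * Re z))"
  have mx[measurable]: "shx \<in> borel_measurable borel" unfolding shx_def by measurable
  have my[measurable]: "shy \<in> borel_measurable borel" unfolding shy_def by measurable
  have eq: "w * z = shx (shy (shx z))" for z
  proof -
    have h1: "1 + al * q = p" using q0 by (simp add: al_def)
    have e: "p*(p*q) + q*(q*q) = q"
    proof -
      have "p*(p*q)+q*(q*q) = q*(p\<^sup>2+q\<^sup>2)" by (simp add: algebra_simps power2_eq_square)
      also have "\<dots> = q" using pq by simp
      finally show ?thesis .
    qed
    have h2: "al + al * p = - q"
      using q0 e by (simp add: al_def field_simps power2_eq_square)
    have "Re (shx (shy (shx z))) = (1+al*q) * Re z + Im z * (al + al*(1+al*q))"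
      by (simp add: shx_def shy_def algebra_simps)
    also have "\<dots> = Re (w * z)" using h1 h2 by (simp add: p_def q_def)
    finally have re: "Re (w * z) = Re (shx (shy (shx z)))" by simp
    have "Im (shx (shy (shx z))) = q * Re z + (1 + al*q) * Im z"
      by (simp add: shx_def shy_def algebra_simps)
    also have "\<dots> = Im (w * z)" using h1 by (simp add: p_def q_def algebra_simps)
    finally have im: "Im (w * z) = Im (shx (shy (shx z)))" by simp
    show ?thesis using re im by (simp add: complex_eq_iff)
  qed
  have "(\<integral>\<^sup>+z. F (w * z) \<partial>lborel) = (\<integral>\<^sup>+z. F (shx (shy (shx z))) \<partial>lborel)"
    by (simp add: eq)
  also have "\<dots> = (\<integral>\<^sup>+z. F (shx (shy z)) \<partial>lborel)"
    using nn_integral_shear_x[of "\<lambda>z. F (shx (shy z))" al] by (simp add: shx_def)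
  also have "\<dots> = (\<integral>\<^sup>+z. F (shx z) \<partial>lborel)"
    using nn_integral_shear_y[of "\<lambda>z. F (shx z)" q] by (simp add: shy_def)
  also have "\<dots> = (\<integral>\<^sup>+z. F z \<partial>lborel)"
    using nn_integral_shear_x[of F al] by (simp add: shx_def)
  finally show ?thesis .
qed

lemma nn_integral_cplx_affine:
  fixes F :: "complex \<Rightarrow> ennreal"
  assumes F[measurable]: "F \<in> borel_measurable borel" and a: "a \<noteq> 0"
  shows "(\<integral>\<^sup>+z. F (a * z + b) \<partial>lborel) = ennreal (1 / (cmod a)\<^sup>2) * (\<integral>\<^sup>+z. F z \<partial>lborel)"
proof -
  define r where "r = cmod a"
  define w where "w = a / of_real r"
  have r0: "r > 0" using a by (simp add: r_def)
  have w1: "cmod w = 1" using a by (simp add: w_def r_def norm_divide)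
  have aw: "a * z + b = b + r *\<^sub>R (w * z)" for z
    using r0 by (simp add: w_def scaleR_conv_of_real)
  have G[measurable]: "(\<lambda>y. F (b + r *\<^sub>R y)) \<in> borel_measurable borel" by measurable
  have "(\<integral>\<^sup>+z. F (a * z + b) \<partial>lborel) = (\<integral>\<^sup>+z. F (b + r *\<^sub>R (w * z)) \<partial>lborel)"
    by (simp add: aw)
  also have "\<dots> = (\<integral>\<^sup>+z. F (b + r *\<^sub>R z) \<partial>lborel)"
    using nn_integral_rot[OF G w1] by simp
  finally have 1: "(\<integral>\<^sup>+z. F (a * z + b) \<partial>lborel) = (\<integral>\<^sup>+z. F (b + r *\<^sub>R z) \<partial>lborel)" .
  have "(\<integral>\<^sup>+z. F z \<partial>lborel) = (\<integral>\<^sup>+z. F z \<partial>density (distr lborel borel (\<lambda>x. b + r *\<^sub>R x)) (\<lambda>_. \<bar>r\<bar>^DIM(complex)))"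
    using r0 by (subst lborel_affine[symmetric]) auto
  also have "\<dots> = (\<integral>\<^sup>+z. ennreal (r\<^sup>2) * F (b + r *\<^sub>R z) \<partial>lborel)"
    using r0 by (simp add: nn_integral_density nn_integral_distr)
  also have "\<dots> = ennreal (r\<^sup>2) * (\<integral>\<^sup>+z. F (b + r *\<^sub>R z) \<partial>lborel)"
    by (simp add: nn_integral_cmult)
  finally have 2: "(\<integral>\<^sup>+z. F z \<partial>lborel) = ennreal (r\<^sup>2) * (\<integral>\<^sup>+z. F (b + r *\<^sub>R z) \<partial>lborel)" .
  have "ennreal (1 / r\<^sup>2) * ennreal (r\<^sup>2) = 1"
    using r0 by (simp add: ennreal_mult[symmetric])
  then show ?thesis
    unfolding 1 2 r_def[symmetric] by (simp add: mult.assoc[symmetric])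
qed

lemma nn_integral_gauss_real: "(\<integral>\<^sup>+x. ennreal (exp (- x\<^sup>2)) \<partial>lborel) = ennreal (sqrt pi)"
proof -
  define \<sigma> where "\<sigma> = sqrt (1/2::real)"
  have s2: "\<sigma>\<^sup>2 = 1/2" by (simp add: \<sigma>_def)
  have nd: "normal_density 0 \<sigma> x = exp (- x\<^sup>2) / sqrt pi" for x
    by (simp add: normal_density_def s2)
  have "(\<integral>\<^sup>+x. ennreal (normal_density 0 \<sigma> x) \<partial>lborel) = ennreal 1"
    using integrable_normal_density[of \<sigma> 0] integral_normal_density[of \<sigma> 0]
    by (subst nn_integral_eq_integral) (auto simp: \<sigma>_def)
  then have "(\<integral>\<^sup>+x. ennreal (exp (- x\<^sup>2)) * ennreal (1 / sqrt pi) \<partial>lborel) = 1"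
    by (simp add: nd ennreal_mult[symmetric] divide_inverse)
  then have "(\<integral>\<^sup>+x. ennreal (exp (- x\<^sup>2)) \<partial>lborel) * ennreal (1 / sqrt pi) = 1"
    by (simp add: nn_integral_multc)
  then have "(\<integral>\<^sup>+x. ennreal (exp (- x\<^sup>2)) \<partial>lborel) * ennreal (1 / sqrt pi) * ennreal (sqrt pi) = ennreal (sqrt pi)"
    by simp
  moreover have "ennreal (1 / sqrt pi) * ennreal (sqrt pi) = 1"
    by (simp add: ennreal_mult[symmetric])
  ultimately show ?thesis by (simp add: mult.assoc)
qed

lemma nn_integral_gauss0: "(\<integral>\<^sup>+z. ennreal (exp (- (cmod z)\<^sup>2)) \<partial>lborel) = ennreal pi"
proof -
  have m: "(\<lambda>z. ennreal (exp (- (cmod z)\<^sup>2))) \<in> borel_measurable borel" by measurable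
  have "(\<integral>\<^sup>+z. ennreal (exp (- (cmod z)\<^sup>2)) \<partial>lborel)
      = (\<integral>\<^sup>+x. \<integral>\<^sup>+y. ennreal (exp (- x\<^sup>2)) * ennreal (exp (- y\<^sup>2)) \<partial>lborel \<partial>lborel)"
    unfolding nn_integral_complex_fst[OF m]
    by (simp add: cmod_def ennreal_mult[symmetric] exp_add[symmetric] del: exp_add)
  also have "\<dots> = (\<integral>\<^sup>+x. ennreal (exp (- x\<^sup>2)) * ennreal (sqrt pi) \<partial>lborel)"
    by (simp add: nn_integral_cmult nn_integral_gauss_real)
  also have "\<dots> = ennreal (sqrt pi) * ennreal (sqrt pi)"
    by (simp add: nn_integral_multc nn_integral_gauss_real)
  also have "\<dots> = ennreal pi"
    by (simp add: ennreal_mult[symmetric])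
  finally show ?thesis .
qed

lemma nn_integral_gauss:
  assumes t: "t > 0"
  shows "(\<integral>\<^sup>+z. ennreal (exp (- (cmod (z - m))\<^sup>2 / t)) \<partial>lborel) = ennreal (pi * t)"
proof -
  define F where "F = (\<lambda>z. ennreal (exp (- (cmod (z - m))\<^sup>2 / t)))"
  have F[measurable]: "F \<in> borel_measurable borel" unfolding F_def by measurable
  have a0: "complex_of_real (sqrt t) \<noteq> 0" using t by simp
  have "F (complex_of_real (sqrt t) * z + m) = ennreal (exp (- (cmod z)\<^sup>2))" for z
    using t by (simp add: F_def norm_mult power_mult_distrib)
  then have "(\<integral>\<^sup>+z. ennreal (exp (- (cmod z)\<^sup>2)) \<partial>lborel) = ennreal (1 / t) * (\<integral>\<^sup>+z. F z \<partial>lborel)"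
    using nn_integral_cplx_affine[OF F a0, of m] t by simp
  then have "ennreal pi = ennreal (1 / t) * (\<integral>\<^sup>+z. F z \<partial>lborel)"
    by (simp add: nn_integral_gauss0)
  then have "ennreal t * ennreal pi = ennreal t * ennreal (1 / t) * (\<integral>\<^sup>+z. F z \<partial>lborel)"
    by (simp add: mult.assoc)
  moreover have "ennreal t * ennreal (1 / t) = 1" using t by (simp add: ennreal_mult[symmetric])
  ultimately show ?thesis using t by (simp add: F_def ennreal_mult[symmetric] mult.commute)
qed

lemma norm_exp_sq: "(cmod (exp w))\<^sup>2 = exp (2 * Re w)"
  by (simp add: norm_exp_eq_Re exp_double[symmetric] power2_eq_square exp_add[symmetric] del: exp_add)

lemma cmod_sq_diff: "(cmod (z - p))\<^sup>2 = (cmod z)\<^sup>2 - 2 * Re (cnj p * z) + (cmod p)\<^sup>2"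
  by (simp add: cmod_power2 power2_diff algebra_simps)



lemma roots_unity_avg:
  assumes N: "N > 0"
  shows "(\<Sum>k<N. (exp (2 * pi * \<i> / of_nat N) ^ k) ^ n) = (if N dvd n then of_nat N else 0)"
proof -
  define q where "q = exp (2 * pi * \<i> / of_nat N) ^ n"
  have pw: "(exp (2 * pi * \<i> / of_nat N) ^ k) ^ n = q ^ k" for k
    by (simp add: q_def power_mult[symmetric] mult.commute)
  have q_eq: "q = exp (2 * pi * \<i> * of_nat n / of_nat N)"
    by (simp add: q_def exp_of_nat_mult[symmetric] algebra_simps)
  have qN: "q ^ N = 1"
  proof -
    have e: "of_nat N * (2 * pi * \<i> * of_nat n / of_nat N) = (2 * pi * \<i> * of_nat n :: complex)"
      using N by simp
    have "q ^ N = exp (of_nat N * (2 * pi * \<i> * of_nat n / of_nat N))"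
      by (simp only: q_eq exp_of_nat_mult)
    also have "\<dots> = exp (2 * pi * \<i> * of_nat n)" by (simp only: e)
    also have "\<dots> = 1" by (simp add: exp_eq_1) (metis of_int_of_nat_eq mult.commute)
    finally show ?thesis .
  qed
  have q1: "q = 1 \<longleftrightarrow> N dvd n"
  proof
    assume "q = 1"
    then obtain m :: int where m: "2 * pi * real n / real N = of_int (2 * m) * pi"
      by (auto simp: q_eq exp_eq_1)
    then have "real n = real N * of_int m" using N by (simp add: field_simps)
    then have "int n = int N * m" by (metis of_int_eq_iff of_int_mult of_int_of_nat_eq)
    then show "N dvd n" by (metis dvd_triv_left int_dvd_int_iff)
  next
    assume "N dvd n"
    then obtain m where "n = N * m" by auto
    then have "q = exp (of_nat m * (2 * pi * \<i>))" using N by (simp add: q_eq field_simps)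
    then show "q = 1" by (simp add: exp_of_nat_mult)
  qed
  show ?thesis
    unfolding pw using qN q1 by (auto simp: sum_gp_strict)
qed

lemma avg_tendsto:
  assumes H: "H holomorphic_on UNIV"
  shows "(\<lambda>n. (\<Sum>k<Suc n. H (exp (2 * pi * \<i> / of_nat (Suc n)) ^ k * x)) / of_nat (Suc n)) \<longlonglongrightarrow> H 0"
proof -
  define a where "a n = (deriv ^^ n) H 0 / fact n" for n
  have S: "(\<lambda>n. a n * y ^ n) sums H y" for y
  proof -
    have "H holomorphic_on ball 0 (cmod y + 1)" using H by (rule holomorphic_on_subset) auto
    from holomorphic_power_series[OF this, of y] show ?thesis by (simp add: a_def)
  qed
  have AS: "summable (\<lambda>n. norm (a n * x ^ n))"
    using powser_insidea[of a "of_real (cmod x + 1)" x] S[of "of_real (cmod x + 1)"]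
    by (auto simp: sums_iff)
  have a0: "a 0 = H 0" by (simp add: a_def)
  define T where "T N = (\<Sum>m. norm (a (m + N) * x ^ (m + N)))" for N
  have bound: "norm ((\<Sum>k<N. H (exp (2 * pi * \<i> / of_nat N) ^ k * x)) / of_nat N - H 0) \<le> T N"
    if N: "N > 0" for N
  proof -
    define w where "w = exp (2 * pi * \<i> / of_nat N)"
    define f where "f n = a n * x ^ n * (if N dvd n \<and> n \<noteq> 0 then 1 else 0)" for n
    have s1: "(\<lambda>n. \<Sum>k<N. a n * (w ^ k * x) ^ n) sums (\<Sum>k<N. H (w ^ k * x))"
      by (rule sums_sum) (rule S)
    have e1: "(\<Sum>k<N. a n * (w ^ k * x) ^ n) = a n * x ^ n * (\<Sum>k<N. (w ^ k) ^ n)" for n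
      by (simp add: sum_distrib_left power_mult_distrib algebra_simps)
    have e2: "(\<Sum>k<N. (w ^ k) ^ n) = (if N dvd n then of_nat N else 0)" for n
      using roots_unity_avg[OF N, of n] by (simp add: w_def)
    have s2: "(\<lambda>n. a n * x ^ n * (if N dvd n then of_nat N else 0)) sums (\<Sum>k<N. H (w ^ k * x))"
      using s1 by (simp only: e1 e2)
    have s3: "(\<lambda>n. a n * x ^ n * (if N dvd n then 1 else 0)) sums ((\<Sum>k<N. H (w ^ k * x)) / of_nat N)"
    proof -
      have "(\<lambda>n. a n * x ^ n * (if N dvd n then of_nat N else 0) / of_nat N) = (\<lambda>n. a n * x ^ n * (if N dvd n then 1 else 0))"
        using N by (auto simp: fun_eq_iff)
      then show ?thesis using sums_divide[OF s2, of "of_nat N"] by simp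
    qed
    have s4: "(\<lambda>n. if n = 0 then a 0 else 0) sums a 0"
      using sums_single[of 0 "\<lambda>_. a 0"] by simp
    have "(\<lambda>n. a n * x ^ n * (if N dvd n then 1 else 0) - (if n = 0 then a 0 else 0)) sums
           ((\<Sum>k<N. H (w ^ k * x)) / of_nat N - a 0)"
      by (rule sums_diff[OF s3 s4])
    moreover have "(\<lambda>n. a n * x ^ n * (if N dvd n then 1 else 0) - (if n = 0 then a 0 else 0)) = f"
      by (auto simp: f_def fun_eq_iff)
    ultimately have sf: "f sums ((\<Sum>k<N. H (w ^ k * x)) / of_nat N - H 0)"
      by (simp add: a0)
    have nf: "norm (f n) \<le> norm (a n * x ^ n)" for n by (simp add: f_def)
    have snf: "summable (\<lambda>n. norm (f n))"
      by (rule summable_comparison_test[OF _ AS]) (auto simp: nf)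
    have f0: "f i = 0" if "i < N" for i
      using that by (auto simp: f_def dest: dvd_imp_le)
    have "norm ((\<Sum>k<N. H (w ^ k * x)) / of_nat N - H 0) = norm (suminf f)"
      using sf by (simp add: sums_iff)
    also have "\<dots> \<le> (\<Sum>n. norm (f n))" by (rule summable_norm[OF snf])
    also have "\<dots> = (\<Sum>m. norm (f (m + N)))"
      using suminf_split_initial_segment[OF snf, of N] f0 by simp
    also have "\<dots> \<le> T N"
      unfolding T_def
    proof (rule suminf_le)
      show "summable (\<lambda>m. norm (f (m + N)))" using snf summable_iff_shift[of "\<lambda>n. norm (f n)" N] by simp
      show "summable (\<lambda>m. norm (a (m + N) * x ^ (m + N)))" using AS summable_iff_shift[of "\<lambda>n. norm (a n * x ^ n)" N] by simp
    qed (simp add: nf)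
    finally show ?thesis by (simp add: w_def)
  qed
  have T0: "(\<lambda>n. T (Suc n)) \<longlonglongrightarrow> 0"
    using suminf_exist_split2[OF AS] unfolding T_def by (rule LIMSEQ_Suc)
  have "(\<lambda>n. (\<Sum>k<Suc n. H (exp (2 * pi * \<i> / of_nat (Suc n)) ^ k * x)) / of_nat (Suc n) - H 0) \<longlonglongrightarrow> 0"
    by (rule Lim_null_comparison[OF _ T0]) (intro always_eventually allI bound, simp)
  then show ?thesis by (rule LIM_zero_cancel)
qed


lemma avg_sq_le:
  fixes z :: "nat \<Rightarrow> complex"
  assumes N: "N > 0"
  shows "(cmod ((\<Sum>k<N. z k) / of_nat N))\<^sup>2 \<le> (\<Sum>k<N. (cmod (z k))\<^sup>2) / real N"
proof -
  have "(cmod (\<Sum>k<N. z k))\<^sup>2 \<le> (\<Sum>k<N. cmod (z k))\<^sup>2"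
    by (intro power_mono norm_sum) auto
  also have "\<dots> = (\<Sum>k<N. cmod (z k) * 1)\<^sup>2" by simp
  also have "\<dots> \<le> (\<Sum>k<N. (cmod (z k))\<^sup>2) * (\<Sum>k<N. 1\<^sup>2)"
    by (rule Cauchy_Schwarz_ineq_sum)
  also have "\<dots> = (\<Sum>k<N. (cmod (z k))\<^sup>2) * real N" by simp
  finally have "(cmod (\<Sum>k<N. z k))\<^sup>2 \<le> (\<Sum>k<N. (cmod (z k))\<^sup>2) * real N" .
  then show ?thesis using N
    by (simp add: norm_divide power_divide field_simps power2_eq_square)
qed

lemma core0:
  fixes H :: "complex \<Rightarrow> complex"
  assumes H: "H holomorphic_on UNIV" and t: "t > 0"
  shows "ennreal ((cmod (H 0))\<^sup>2) \<le> (\<integral>\<^sup>+x. ennreal ((cmod (H x))\<^sup>2 * (exp (- (cmod x)\<^sup>2 / t) / (pi * t))) \<partial>lborel)"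
proof -
  define w where "w x = exp (- (cmod x)\<^sup>2 / t) / (pi * t)" for x
  define R where "R = (\<integral>\<^sup>+x. ennreal ((cmod (H x))\<^sup>2 * w x) \<partial>lborel)"
  have Hc: "continuous_on UNIV H" using H by (rule holomorphic_on_imp_continuous_on)
  have Hm[measurable]: "H \<in> borel_measurable borel" by (rule borel_measurable_continuous_onI[OF Hc])
  have wm[measurable]: "w \<in> borel_measurable borel" unfolding w_def by measurable
  have w0: "w x \<ge> 0" for x using t by (simp add: w_def)
  define om where "om n = exp (2 * pi * \<i> / of_nat (Suc n))" for n
  define A where "A n x = (\<Sum>k<Suc n. H (om n ^ k * x)) / of_nat (Suc n)" for n x
  define g where "g n x = ennreal ((cmod (A n x))\<^sup>2 * w x)" for n x
  have gm[measurable]: "g n \<in> borel_measurable borel" for n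
    unfolding g_def A_def by measurable
  have rotk: "(\<integral>\<^sup>+x. ennreal ((cmod (H (om n ^ k * x)))\<^sup>2 * w x) \<partial>lborel) = R" for n k
  proof -
    have c1: "cmod (om n ^ k) = 1" by (simp add: om_def norm_power norm_exp_eq_Re)
    have "w (om n ^ k * x) = w x" for x by (simp add: w_def norm_mult c1)
    then show ?thesis
      using nn_integral_rot[of "\<lambda>y. ennreal ((cmod (H y))\<^sup>2 * w y)" "om n ^ k"] c1 by (simp add: R_def)
  qed
  have gle: "(\<integral>\<^sup>+x. g n x \<partial>lborel) \<le> R" for n
  proof -
    have pt: "g n x \<le> ennreal (1 / real (Suc n)) * (\<Sum>k<Suc n. ennreal ((cmod (H (om n ^ k * x)))\<^sup>2 * w x))" for x
    proof -
      have "(cmod (A n x))\<^sup>2 * w x \<le> ((\<Sum>k<Suc n. (cmod (H (om n ^ k * x)))\<^sup>2) / real (Suc n)) * w x"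
        unfolding A_def by (intro mult_right_mono avg_sq_le w0) simp
      also have "\<dots> = (1 / real (Suc n)) * (\<Sum>k<Suc n. (cmod (H (om n ^ k * x)))\<^sup>2 * w x)"
        by (simp only: sum_distrib_right[symmetric]) simp
      finally have le: "(cmod (A n x))\<^sup>2 * w x \<le> 1 / real (Suc n) * (\<Sum>k<Suc n. (cmod (H (om n ^ k * x)))\<^sup>2 * w x)" .
      have eq: "ennreal (1 / real (Suc n)) * (\<Sum>k<Suc n. ennreal ((cmod (H (om n ^ k * x)))\<^sup>2 * w x))
          = ennreal (1 / real (Suc n) * (\<Sum>k<Suc n. (cmod (H (om n ^ k * x)))\<^sup>2 * w x))"
      proof -
        have e: "(\<Sum>k<Suc n. ennreal ((cmod (H (om n ^ k * x)))\<^sup>2 * w x)) = ennreal (\<Sum>k<Suc n. (cmod (H (om n ^ k * x)))\<^sup>2 * w x)"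
          by (rule sum_ennreal) (simp add: w0)
        have nn: "(\<Sum>k<Suc n. (cmod (H (om n ^ k * x)))\<^sup>2 * w x) \<ge> 0"
          by (intro sum_nonneg) (simp add: w0)
        show ?thesis unfolding e by (rule ennreal_mult[symmetric]) (use nn in \<open>simp_all del: sum.lessThan_Suc\<close>)
      qed
      show ?thesis unfolding g_def eq by (rule ennreal_leI[OF le])
    qed
    have "(\<integral>\<^sup>+x. g n x \<partial>lborel) \<le> (\<integral>\<^sup>+x. ennreal (1 / real (Suc n)) * (\<Sum>k<Suc n. ennreal ((cmod (H (om n ^ k * x)))\<^sup>2 * w x)) \<partial>lborel)"
      by (intro nn_integral_mono pt)
    also have "\<dots> = ennreal (1 / real (Suc n)) * (\<Sum>k<Suc n. (\<integral>\<^sup>+x. ennreal ((cmod (H (om n ^ k * x)))\<^sup>2 * w x) \<partial>lborel))"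
    proof -
      have "(\<integral>\<^sup>+x. (\<Sum>k<Suc n. ennreal ((cmod (H (om n ^ k * x)))\<^sup>2 * w x)) \<partial>lborel)
          = (\<Sum>k<Suc n. (\<integral>\<^sup>+x. ennreal ((cmod (H (om n ^ k * x)))\<^sup>2 * w x) \<partial>lborel))"
        by (rule nn_integral_sum) measurable
      moreover have "(\<lambda>x. \<Sum>k<Suc n. ennreal ((cmod (H (om n ^ k * x)))\<^sup>2 * w x)) \<in> borel_measurable lborel"
        by measurable
      ultimately show ?thesis by (simp only: nn_integral_cmult)
    qed
    also have "\<dots> = ennreal (1 / real (Suc n)) * (of_nat (Suc n) * R)"
      by (simp add: rotk)
    also have "\<dots> = R"
      by (simp add: mult.assoc[symmetric] ennreal_of_nat_eq_real_of_nat ennreal_mult[symmetric] del: of_nat_Suc)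
    finally show ?thesis .
  qed
  have lim: "(\<lambda>n. g n x) \<longlonglongrightarrow> ennreal ((cmod (H 0))\<^sup>2 * w x)" for x
  proof -
    have "(\<lambda>n. A n x) \<longlonglongrightarrow> H 0" using avg_tendsto[OF H, of x] by (simp add: A_def om_def)
    then show ?thesis unfolding g_def by (intro tendsto_ennrealI tendsto_intros)
  qed
  have "(\<integral>\<^sup>+x. ennreal ((cmod (H 0))\<^sup>2 * w x) \<partial>lborel) = (\<integral>\<^sup>+x. liminf (\<lambda>n. g n x) \<partial>lborel)"
    by (intro nn_integral_cong lim_imp_Liminf[symmetric] lim) simp
  also have "\<dots> \<le> liminf (\<lambda>n. \<integral>\<^sup>+x. g n x \<partial>lborel)"
    by (rule nn_integral_liminf) simp
  also have "\<dots> \<le> limsup (\<lambda>n. \<integral>\<^sup>+x. g n x \<partial>lborel)"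
    by (rule Liminf_le_Limsup) simp
  also have "\<dots> \<le> R"
    by (rule Limsup_bounded) (simp add: gle)
  finally have 1: "(\<integral>\<^sup>+x. ennreal ((cmod (H 0))\<^sup>2 * w x) \<partial>lborel) \<le> R" .
  have "(\<integral>\<^sup>+x. ennreal ((cmod (H 0))\<^sup>2 * w x) \<partial>lborel)
      = (\<integral>\<^sup>+x. ennreal ((cmod (H 0))\<^sup>2 / (pi * t)) * ennreal (exp (- (cmod (x - 0))\<^sup>2 / t)) \<partial>lborel)"
    using t by (intro nn_integral_cong) (simp add: w_def ennreal_mult[symmetric])
  also have "\<dots> = ennreal ((cmod (H 0))\<^sup>2 / (pi * t)) * ennreal (pi * t)"
    using nn_integral_gauss[OF t, of 0] by (simp add: nn_integral_cmult)
  also have "\<dots> = ennreal ((cmod (H 0))\<^sup>2)"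
    using t by (simp add: ennreal_mult[symmetric])
  finally show ?thesis using 1 by (simp add: R_def w_def)
qed


definition gw :: "real \<Rightarrow> complex \<Rightarrow> real" where
  "gw t x = exp (- (cmod x)\<^sup>2 / t) / (pi * t)"

lemma gw_nonneg: "t > 0 \<Longrightarrow> gw t x \<ge> 0"
  by (simp add: gw_def)

lemma gw_meas[measurable]: "gw t \<in> borel_measurable borel"
  unfolding gw_def by measurable

lemma nn_integral_gw: "t > 0 \<Longrightarrow> (\<integral>\<^sup>+y. ennreal (gw t (y - c)) \<partial>lborel) = 1"
proof -
  assume t: "t > 0"
  have "(\<integral>\<^sup>+y. ennreal (gw t (y - c)) \<partial>lborel) = (\<integral>\<^sup>+y. ennreal (1 / (pi * t)) * ennreal (exp (- (cmod (y - c))\<^sup>2 / t)) \<partial>lborel)"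
    using t by (intro nn_integral_cong) (simp add: gw_def ennreal_mult[symmetric])
  also have "\<dots> = ennreal (1 / (pi * t)) * ennreal (pi * t)"
    using nn_integral_gauss[OF t, of c] by (simp add: nn_integral_cmult)
  also have "\<dots> = 1" using t by (simp add: ennreal_mult[symmetric])
  finally show ?thesis .
qed

lemma core:
  fixes G :: "complex \<Rightarrow> complex"
  assumes G: "G holomorphic_on UNIV" and t: "t > 0"
  shows "ennreal ((cmod (G m))\<^sup>2) \<le> (\<integral>\<^sup>+u. ennreal ((cmod (G u))\<^sup>2 * gw t (u - m)) \<partial>lborel)"
proof -
  have "(G \<circ> (\<lambda>x. x + m)) holomorphic_on UNIV"
    by (rule holomorphic_on_compose_gen[OF _ G]) (auto intro: holomorphic_intros)
  then have H: "(\<lambda>x. G (x + m)) holomorphic_on UNIV" by (simp add: o_def)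
  have Gc: "continuous_on UNIV G" using G by (rule holomorphic_on_imp_continuous_on)
  have Gm[measurable]: "G \<in> borel_measurable borel" by (rule borel_measurable_continuous_onI[OF Gc])
  have F: "(\<lambda>u. ennreal ((cmod (G u))\<^sup>2 * gw t (u - m))) \<in> borel_measurable borel" by measurable
  have "ennreal ((cmod (G m))\<^sup>2) \<le> (\<integral>\<^sup>+x. ennreal ((cmod (G (x + m)))\<^sup>2 * gw t x) \<partial>lborel)"
    using core0[OF H t] by (simp add: gw_def)
  also have "\<dots> = (\<integral>\<^sup>+u. ennreal ((cmod (G u))\<^sup>2 * gw t (u - m)) \<partial>lborel)"
    using nn_integral_cplx_affine[OF F, of 1 m] by simp
  finally show ?thesis .
qed

lemma gw_conv_pt:
  assumes s: "0 < s" "s < 1"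
  shows "gw s (y - m) * gw (1 - s) (u - y) = gw 1 (u - m) * gw (s * (1 - s)) (y - (of_real (1 - s) * m + of_real s * u))"
proof -
  have id: "(1 - s) * (cmod (y - m))\<^sup>2 + s * (cmod (u - y))\<^sup>2
      = s * (1 - s) * (cmod (u - m))\<^sup>2 + (cmod (y - (of_real (1 - s) * m + of_real s * u)))\<^sup>2"
  proof -
    have "(cmod (y - (of_real (1 - s) * m + of_real s * u)))\<^sup>2 = (Re y - ((1 - s) * Re m + s * Re u))\<^sup>2 + (Im y - ((1 - s) * Im m + s * Im u))\<^sup>2"
      by (simp add: cmod_power2)
    moreover have "(cmod (y - m))\<^sup>2 = (Re y - Re m)\<^sup>2 + (Im y - Im m)\<^sup>2" by (simp add: cmod_power2)
    moreover have "(cmod (u - y))\<^sup>2 = (Re u - Re y)\<^sup>2 + (Im u - Im y)\<^sup>2" by (simp add: cmod_power2)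
    moreover have "(cmod (u - m))\<^sup>2 = (Re u - Re m)\<^sup>2 + (Im u - Im m)\<^sup>2" by (simp add: cmod_power2)
    ultimately show ?thesis
      by (simp only:) (simp add: power2_eq_square algebra_simps)
  qed
  have id2: "- (cmod (y - m))\<^sup>2 / s + - (cmod (u - y))\<^sup>2 / (1 - s)
      = - (cmod (u - m))\<^sup>2 / 1 + - (cmod (y - (of_real (1 - s) * m + of_real s * u)))\<^sup>2 / (s * (1 - s))"
  proof -
    have "- (cmod (y - m))\<^sup>2 / s + - (cmod (u - y))\<^sup>2 / (1 - s)
        = - ((1 - s) * (cmod (y - m))\<^sup>2 + s * (cmod (u - y))\<^sup>2) / (s * (1 - s))"
      using s by (simp add: field_simps)
    also have "\<dots> = - (s * (1 - s) * (cmod (u - m))\<^sup>2 + (cmod (y - (of_real (1 - s) * m + of_real s * u)))\<^sup>2) / (s * (1 - s))"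
      by (simp only: id)
    also have "\<dots> = - (cmod (u - m))\<^sup>2 / 1 + - (cmod (y - (of_real (1 - s) * m + of_real s * u)))\<^sup>2 / (s * (1 - s))"
      using s by (simp add: field_simps)
    finally show ?thesis .
  qed
  define A where "A = - (cmod (y - m))\<^sup>2 / s"
  define B where "B = - (cmod (u - y))\<^sup>2 / (1 - s)"
  define C where "C = - (cmod (u - m))\<^sup>2 / 1"
  define D where "D = - (cmod (y - (of_real (1 - s) * m + of_real s * u)))\<^sup>2 / (s * (1 - s))"
  have ABCD: "A + B = C + D" using id2 by (simp add: A_def B_def C_def D_def)
  have "gw s (y - m) * gw (1 - s) (u - y) = (exp A * exp B) / (pi * s * (pi * (1 - s)))"
    by (simp add: gw_def A_def B_def)
  also have "exp A * exp B = exp C * exp D" by (simp only: exp_add[symmetric] ABCD)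
  also have "exp C * exp D / (pi * s * (pi * (1 - s))) = gw 1 (u - m) * gw (s * (1 - s)) (y - (of_real (1 - s) * m + of_real s * u))"
    by (simp add: gw_def C_def D_def field_simps)
  finally show ?thesis .
qed

lemma gw_conv:
  assumes s: "0 < s" "s < 1"
  shows "(\<integral>\<^sup>+y. ennreal (gw s (y - m) * gw (1 - s) (u - y)) \<partial>lborel) = ennreal (gw 1 (u - m))"
proof -
  have "(\<integral>\<^sup>+y. ennreal (gw s (y - m) * gw (1 - s) (u - y)) \<partial>lborel)
      = (\<integral>\<^sup>+y. ennreal (gw 1 (u - m)) * ennreal (gw (s * (1 - s)) (y - (of_real (1 - s) * m + of_real s * u))) \<partial>lborel)"
    using s by (intro nn_integral_cong) (simp add: gw_conv_pt ennreal_mult[symmetric] gw_nonneg)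
  also have "\<dots> = ennreal (gw 1 (u - m))"
    using s by (simp add: nn_integral_cmult nn_integral_gw)
  finally show ?thesis .
qed

lemma key:
  fixes G :: "complex \<Rightarrow> complex"
  assumes G: "G holomorphic_on UNIV" and s: "0 < s" "s < 1"
  shows "(\<integral>\<^sup>+u. ennreal ((cmod (G u))\<^sup>2 * gw s (u - m)) \<partial>lborel) \<le> (\<integral>\<^sup>+u. ennreal ((cmod (G u))\<^sup>2 * gw 1 (u - m)) \<partial>lborel)"
proof -
  have Gc: "continuous_on UNIV G" using G by (rule holomorphic_on_imp_continuous_on)
  have Gm[measurable]: "G \<in> borel_measurable borel" by (rule borel_measurable_continuous_onI[OF Gc])
  have s1: "1 - s > 0" using s by simp
  have "(\<integral>\<^sup>+u. ennreal ((cmod (G u))\<^sup>2 * gw 1 (u - m)) \<partial>lborel)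
      = (\<integral>\<^sup>+u. \<integral>\<^sup>+y. ennreal ((cmod (G u))\<^sup>2) * ennreal (gw s (y - m) * gw (1 - s) (u - y)) \<partial>lborel \<partial>lborel)"
    by (intro nn_integral_cong) (simp add: nn_integral_cmult gw_conv[OF s] ennreal_mult gw_nonneg)
  also have "\<dots> = (\<integral>\<^sup>+y. \<integral>\<^sup>+u. ennreal ((cmod (G u))\<^sup>2) * ennreal (gw s (y - m) * gw (1 - s) (u - y)) \<partial>lborel \<partial>lborel)"
    by (rule lborel_pair.Fubini'[symmetric]) measurable
  also have "\<dots> = (\<integral>\<^sup>+y. ennreal (gw s (y - m)) * (\<integral>\<^sup>+u. ennreal ((cmod (G u))\<^sup>2 * gw (1 - s) (u - y)) \<partial>lborel) \<partial>lborel)"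
    using s s1 by (intro nn_integral_cong) (simp add: nn_integral_cmult[symmetric] ennreal_mult[symmetric] gw_nonneg mult_ac)
  also have "\<dots> \<ge> (\<integral>\<^sup>+y. ennreal (gw s (y - m)) * ennreal ((cmod (G y))\<^sup>2) \<partial>lborel)"
    by (intro nn_integral_mono mult_left_mono core[OF G s1]) simp
  finally show ?thesis
    using s by (simp add: ennreal_mult[symmetric] gw_nonneg mult.commute)
qed



lemma alg_A:
  fixes a b c :: complex
  assumes s1: "s = (cmod a)\<^sup>2" and sl: "s < 1"
  defines "\<mu> \<equiv> - (b + a * c) / of_real (1 - s)"
  shows "(cmod (c - cnj a * \<mu>))\<^sup>2 - 2 * Re (cnj \<mu> * b) - (cmod \<mu>)\<^sup>2 = (cmod c)\<^sup>2 + (cmod (b + a * c))\<^sup>2 / (1 - s)"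
proof -
  have d: "1 - s \<noteq> 0" using sl by simp
  have s2: "s = (Re a)\<^sup>2 + (Im a)\<^sup>2" using s1 by (simp add: cmod_power2)
  have m: "\<mu> * of_real (1 - s) = - (b + a * c)" using d by (simp add: \<mu>_def)
  have m1: "Re \<mu> * (1 - s) = - (Re b + Re a * Re c - Im a * Im c)"
    using arg_cong[OF m, of Re] by simp
  have m2: "Im \<mu> * (1 - s) = - (Im b + Re a * Im c + Im a * Re c)"
    using arg_cong[OF m, of Im] by simp
  have "(1 - s) * ((cmod (c - cnj a * \<mu>))\<^sup>2 - 2 * Re (cnj \<mu> * b) - (cmod \<mu>)\<^sup>2) = (1 - s) * (cmod c)\<^sup>2 + (cmod (b + a * c))\<^sup>2"
    unfolding cmod_power2 using m1 m2 s2 by simp algebra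
  then show ?thesis using d by (simp add: field_simps)
qed


lemma alg_B:
  fixes a b c :: complex
  assumes s1: "s = (cmod a)\<^sup>2" and sl: "s < 1"
  shows "(cmod c)\<^sup>2 + (cmod (b + a * c))\<^sup>2 / (1 - s)
       = 2 * Re (cnj c * b / (1 - a)) + (cmod (c * (1 - a) / (cnj a - 1) + b))\<^sup>2 / (1 - s)"
proof -
  have d: "1 - s \<noteq> 0" using sl by simp
  have s2: "s = (Re a)\<^sup>2 + (Im a)\<^sup>2" using s1 by (simp add: cmod_power2)
  have a1: "a \<noteq> 1" using s1 sl by auto
  define k where "k = 1 / (1 - a)"
  have hk: "k * (1 - a) = 1" using a1 by (simp add: k_def)
  have k1: "Re k * (1 - Re a) + Im k * Im a = 1" using arg_cong[OF hk, of Re] by (simp add: algebra_simps)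
  have k2: "Im k * (1 - Re a) - Re k * Im a = 0" using arg_cong[OF hk, of Im] by (simp add: algebra_simps)
  have e1: "cnj c * b / (1 - a) = cnj c * b * k" by (simp add: k_def)
  have e2: "c * (1 - a) / (cnj a - 1) = - c * (1 - a) * cnj k"
  proof -
    have "cnj a - 1 = - cnj (1 - a)" by simp
    then show ?thesis by (simp add: k_def divide_simps) (simp add: algebra_simps)
  qed
  have "(1 - s) * (cmod c)\<^sup>2 + (cmod (b + a * c))\<^sup>2
       = (1 - s) * (2 * Re (cnj c * b * k)) + (cmod (- c * (1 - a) * cnj k + b))\<^sup>2"
    unfolding cmod_power2 using k1 k2 s2 by simp algebra
  then show ?thesis unfolding e1 e2 using d by (simp add: field_simps)
qed




lemma T_eq: "wcomp (fock_kernel c) (\<lambda>z. a * z + b) f = (\<lambda>z. exp (cnj c * z) * f (a * z + b))"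
  by (simp add: wcomp_def fock_kernel_def)

lemma fock_nn_kern: "fock_nn (\<lambda>z. C * exp (cnj p * z)) = ennreal ((cmod C)\<^sup>2 * exp ((cmod p)\<^sup>2))"
proof -
  have pt: "(cmod (C * exp (cnj p * z)))\<^sup>2 * exp (- (cmod z)\<^sup>2) / pi = (cmod C)\<^sup>2 * exp ((cmod p)\<^sup>2) * gw 1 (z - p)" for z
  proof -
    have e: "2 * Re (cnj p * z) + - (cmod z)\<^sup>2 = (cmod p)\<^sup>2 + - (cmod (z - p))\<^sup>2"
      using cmod_sq_diff[of z p] by simp
    have "(cmod (C * exp (cnj p * z)))\<^sup>2 * exp (- (cmod z)\<^sup>2) = (cmod C)\<^sup>2 * (exp (2 * Re (cnj p * z)) * exp (- (cmod z)\<^sup>2))"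
      by (simp only: norm_mult power_mult_distrib norm_exp_sq)
    also have "exp (2 * Re (cnj p * z)) * exp (- (cmod z)\<^sup>2) = exp ((cmod p)\<^sup>2) * exp (- (cmod (z - p))\<^sup>2)"
      by (simp only: exp_add[symmetric] e)
    finally show ?thesis by (simp add: gw_def)
  qed
  have "fock_nn (\<lambda>z. C * exp (cnj p * z)) = (\<integral>\<^sup>+z. ennreal ((cmod C)\<^sup>2 * exp ((cmod p)\<^sup>2)) * ennreal (gw 1 (z - p)) \<partial>lborel)"
    unfolding fock_nn_def by (intro nn_integral_cong) (simp add: pt ennreal_mult gw_nonneg)
  also have "\<dots> = ennreal ((cmod C)\<^sup>2 * exp ((cmod p)\<^sup>2))"
    by (simp add: nn_integral_cmult nn_integral_gw)
  finally show ?thesis .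
qed

lemma kern_in_fock: "(\<lambda>z. C * exp (cnj p * z)) \<in> fock_space"
  unfolding fock_space_def by (auto simp: fock_nn_kern intro!: holomorphic_intros)

lemma T_kern: "(\<lambda>z. exp (cnj c * z) * (C * exp (cnj w * (a * z + b)))) = (\<lambda>z. (C * exp (cnj w * b)) * exp (cnj (c + cnj a * w) * z))"
  by (rule ext) (simp add: exp_add[symmetric] algebra_simps del: exp_add)

lemma opnorm_eq:
  assumes V: "V \<ge> 0"
    and up: "\<And>f. f \<in> fock_space \<Longrightarrow> fock_nn (T f) \<le> ennreal V * fock_nn f"
    and f0: "f0 \<in> fock_space" "fock_nn f0 = 1" "fock_nn (T f0) = ennreal V"
  shows "fock_op_norm T = sqrt V"
proof -
  define S where "S = {fock_norm (T f) | f. f \<in> fock_space \<and> fock_norm f \<le> 1}"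
  have inS: "sqrt V \<in> S"
    unfolding S_def using f0 V by (auto simp: fock_norm_def intro!: exI[of _ f0])
  have le: "x \<le> sqrt V" if xS: "x \<in> S" for x
  proof -
    obtain f where f: "f \<in> fock_space" "fock_norm f \<le> 1" and x: "x = fock_norm (T f)"
      using xS unfolding S_def by blast
    have fin: "fock_nn f < \<infinity>" using f by (simp add: fock_space_def)
    have "enn2real (fock_nn (T f)) \<le> enn2real (ennreal V * fock_nn f)"
      using up[OF f(1)] fin by (intro enn2real_mono) (auto simp: ennreal_mult_less_top)
    also have "\<dots> = V * enn2real (fock_nn f)" using V by (simp add: enn2real_mult)
    finally have "x \<le> sqrt (V * enn2real (fock_nn f))" by (simp add: x fock_norm_def)
    also have "\<dots> = sqrt V * fock_norm f" by (simp add: fock_norm_def real_sqrt_mult)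
    also have "\<dots> \<le> sqrt V" using f(2) V by (intro mult_left_le) auto
    finally show ?thesis .
  qed
  have "Sup S = sqrt V" by (rule cSup_eq_maximum[OF inS le])
  then show ?thesis by (simp add: fock_op_norm_def S_def)
qed


lemma fock_meas:
  assumes "f holomorphic_on UNIV"
  shows "f \<in> borel_measurable borel"
  using assms by (intro borel_measurable_continuous_onI holomorphic_on_imp_continuous_on)

lemma point_bound:
  assumes f: "f holomorphic_on UNIV"
  shows "ennreal ((cmod (f b))\<^sup>2) \<le> ennreal (exp ((cmod b)\<^sup>2)) * fock_nn f"
proof -
  have fm[measurable]: "f \<in> borel_measurable borel" by (rule fock_meas[OF f])
  define G where "G u = f u * exp (cnj (- b) * u)" for u
  have G: "G holomorphic_on UNIV" unfolding G_def by (intro holomorphic_intros f)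
  have cb: "cnj (- b) * b = - of_real ((cmod b)\<^sup>2)" using complex_norm_square[of b] by (simp add: mult.commute)
  have Gb: "(cmod (G b))\<^sup>2 = (cmod (f b))\<^sup>2 * exp (- 2 * (cmod b)\<^sup>2)"
    by (simp only: G_def norm_mult power_mult_distrib norm_exp_sq cb) simp
  have pt: "(cmod (G u))\<^sup>2 * gw 1 (u - b) = exp (- (cmod b)\<^sup>2) * ((cmod (f u))\<^sup>2 * exp (- (cmod u)\<^sup>2) / pi)" for u
  proof -
    have e: "2 * Re (cnj (- b) * u) + - (cmod (u - b))\<^sup>2 = - (cmod b)\<^sup>2 + - (cmod u)\<^sup>2"
      using cmod_sq_diff[of u b] by simp
    have "(cmod (G u))\<^sup>2 * gw 1 (u - b) = (cmod (f u))\<^sup>2 * (exp (2 * Re (cnj (- b) * u)) * exp (- (cmod (u - b))\<^sup>2)) / pi"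
      by (simp only: G_def gw_def norm_mult power_mult_distrib norm_exp_sq) simp
    also have "exp (2 * Re (cnj (- b) * u)) * exp (- (cmod (u - b))\<^sup>2) = exp (- (cmod b)\<^sup>2) * exp (- (cmod u)\<^sup>2)"
      by (simp only: exp_add[symmetric] e)
    finally show ?thesis by simp
  qed
  have "ennreal ((cmod (f b))\<^sup>2 * exp (- 2 * (cmod b)\<^sup>2)) \<le> (\<integral>\<^sup>+u. ennreal ((cmod (G u))\<^sup>2 * gw 1 (u - b)) \<partial>lborel)"
    using core[OF G, of 1 b] by (simp add: Gb)
  also have "\<dots> = (\<integral>\<^sup>+u. ennreal (exp (- (cmod b)\<^sup>2)) * ennreal ((cmod (f u))\<^sup>2 * exp (- (cmod u)\<^sup>2) / pi) \<partial>lborel)"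
    unfolding pt by (intro nn_integral_cong) (subst ennreal_mult[symmetric], simp_all)
  also have "\<dots> = ennreal (exp (- (cmod b)\<^sup>2)) * fock_nn f"
    unfolding fock_nn_def by (rule nn_integral_cmult) measurable
  finally have 1: "ennreal ((cmod (f b))\<^sup>2 * exp (- 2 * (cmod b)\<^sup>2)) \<le> ennreal (exp (- (cmod b)\<^sup>2)) * fock_nn f" .
  have "ennreal ((cmod (f b))\<^sup>2) = ennreal (exp (2 * (cmod b)\<^sup>2)) * ennreal ((cmod (f b))\<^sup>2 * exp (- 2 * (cmod b)\<^sup>2))"
    by (simp add: ennreal_mult[symmetric] exp_minus field_simps)
  also have "\<dots> \<le> ennreal (exp (2 * (cmod b)\<^sup>2)) * (ennreal (exp (- (cmod b)\<^sup>2)) * fock_nn f)"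
    by (intro mult_left_mono 1) simp
  also have "\<dots> = ennreal (exp (2 * (cmod b)\<^sup>2) * exp (- (cmod b)\<^sup>2)) * fock_nn f"
    by (simp add: ennreal_mult mult.assoc)
  also have "exp (2 * (cmod b)\<^sup>2) * exp (- (cmod b)\<^sup>2) = exp ((cmod b)\<^sup>2)"
    by (simp add: exp_add[symmetric] del: exp_add)
  finally show ?thesis .
qed

lemma upper_a0:
  assumes f: "f holomorphic_on UNIV"
  shows "fock_nn (\<lambda>z. exp (cnj c * z) * f (0 * z + b)) \<le> ennreal (exp ((cmod c)\<^sup>2 + (cmod b)\<^sup>2)) * fock_nn f"
proof -
  have "(\<lambda>z. exp (cnj c * z) * f (0 * z + b)) = (\<lambda>z. f b * exp (cnj c * z))"
    by (simp add: mult.commute)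
  then have "fock_nn (\<lambda>z. exp (cnj c * z) * f (0 * z + b)) = ennreal ((cmod (f b))\<^sup>2 * exp ((cmod c)\<^sup>2))"
    by (simp only: fock_nn_kern)
  also have "\<dots> = ennreal (exp ((cmod c)\<^sup>2)) * ennreal ((cmod (f b))\<^sup>2)"
    by (simp add: ennreal_mult[symmetric] mult.commute)
  also have "\<dots> \<le> ennreal (exp ((cmod c)\<^sup>2)) * (ennreal (exp ((cmod b)\<^sup>2)) * fock_nn f)"
    by (intro mult_left_mono point_bound f) simp
  also have "\<dots> = ennreal (exp ((cmod c)\<^sup>2 + (cmod b)\<^sup>2)) * fock_nn f"
    by (simp add: exp_add ennreal_mult mult.assoc)
  finally show ?thesis .
qed


lemma upper_main:
  fixes a b c :: complex
  assumes f: "f holomorphic_on UNIV" and a0: "a \<noteq> 0" and a1: "cmod a < 1"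
  defines "s \<equiv> (cmod a)\<^sup>2"
  defines "\<mu> \<equiv> - (b + a * c) / of_real (1 - s)"
  shows "fock_nn (\<lambda>z. exp (cnj c * z) * f (a * z + b))
     \<le> ennreal (exp ((cmod (c - cnj a * \<mu>))\<^sup>2 - 2 * Re (cnj \<mu> * b) - (cmod \<mu>)\<^sup>2)) * fock_nn f"
proof -
  have fm[measurable]: "f \<in> borel_measurable borel" by (rule fock_meas[OF f])
  have s0: "0 < s" using a0 by (simp add: s_def)
  have s1: "s < 1" using a1 by (simp add: s_def power_less_one_iff abs_less_iff)
  define p where "p = c - cnj a * \<mu>"
  have aa: "a * cnj a = of_real s" using complex_norm_square[of a] by (simp add: s_def)
  have m: "\<mu> * (1 - a * cnj a) = - (b + a * c)"
    using s1 by (simp add: aa \<mu>_def)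
  have hb: "b + \<mu> = - a * p"
    using m unfolding p_def by algebra
  define G where "G u = f u * exp (cnj \<mu> * u)" for u
  have G: "G holomorphic_on UNIV" unfolding G_def by (intro holomorphic_intros f)
  have Gm[measurable]: "G \<in> borel_measurable borel" by (rule fock_meas[OF G])
  have G2: "(cmod (G u))\<^sup>2 = (cmod (f u))\<^sup>2 * exp (2 * Re (cnj \<mu> * u))" for u
    by (simp only: G_def norm_mult power_mult_distrib norm_exp_sq)
  define E where "E = exp ((cmod p)\<^sup>2 - 2 * Re (cnj \<mu> * b))"
  have P1: "(cmod (f u))\<^sup>2 * exp (- (cmod u)\<^sup>2) / pi = exp ((cmod \<mu>)\<^sup>2) * ((cmod (G u))\<^sup>2 * gw 1 (u - - \<mu>))" for u
  proof -
    define X where "X = (cmod \<mu>)\<^sup>2"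
    define Y where "Y = 2 * Re (cnj \<mu> * u)"
    define Z where "Z = - (cmod (u - - \<mu>))\<^sup>2"
    have e: "X + (Y + Z) = - (cmod u)\<^sup>2"
      using cmod_sq_diff[of u "- \<mu>"] by (simp add: X_def Y_def Z_def)
    have g1: "(cmod (G u))\<^sup>2 = (cmod (f u))\<^sup>2 * exp Y" by (simp only: G2 Y_def)
    have g2: "gw 1 (u - - \<mu>) = exp Z / pi" by (simp add: gw_def Z_def)
    have r: "\<forall>x1 x2 x3 x4::real. x1 * ((x2 * x3) * (x4 / pi)) = x2 * (x1 * (x3 * x4)) / pi" by simp
    have "exp X * ((cmod (G u))\<^sup>2 * gw 1 (u - - \<mu>)) = (cmod (f u))\<^sup>2 * exp (X + (Y + Z)) / pi"
      unfolding g1 g2 exp_add using r by blast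
    then have "exp X * ((cmod (G u))\<^sup>2 * gw 1 (u - - \<mu>)) = (cmod (f u))\<^sup>2 * exp (- (cmod u)\<^sup>2) / pi"
      by (simp only: e)
    then show ?thesis unfolding X_def by (rule sym)
  qed
  have P2: "(cmod (exp (cnj c * z) * f (a * z + b)))\<^sup>2 * exp (- (cmod z)\<^sup>2) / pi
      = E * s * ((cmod (G (a * z + b)))\<^sup>2 * gw s ((a * z + b) - - \<mu>))" for z
  proof -
    have v: "(a * z + b) - - \<mu> = a * (z - p)"
    proof -
      have "(a * z + b) - - \<mu> = a * z + (b + \<mu>)" by simp
      also have "\<dots> = a * z + - a * p" by (simp only: hb)
      finally show ?thesis by (simp add: algebra_simps)
    qed
    have nv: "(cmod ((a * z + b) - - \<mu>))\<^sup>2 / s = (cmod (z - p))\<^sup>2"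
      using s0 unfolding v by (simp add: norm_mult power_mult_distrib s_def)
    define X where "X = (cmod p)\<^sup>2 - 2 * Re (cnj \<mu> * b)"
    define Y where "Y = 2 * Re (cnj \<mu> * (a * z + b))"
    define Z where "Z = - ((cmod ((a * z + b) - - \<mu>))\<^sup>2 / s)"
    have ex: "2 * Re (cnj c * z) + - (cmod z)\<^sup>2 = X + (Y + Z)"
      unfolding X_def Y_def Z_def nv cmod_sq_diff[of z p] by (simp add: p_def algebra_simps)
    have g1: "(cmod (G (a * z + b)))\<^sup>2 = (cmod (f (a * z + b)))\<^sup>2 * exp Y" by (simp only: G2 Y_def)
    have g2: "gw s ((a * z + b) - - \<mu>) = exp Z / (pi * s)" by (simp add: gw_def Z_def)
    have l: "(cmod (exp (cnj c * z) * f (a * z + b)))\<^sup>2 = exp (2 * Re (cnj c * z)) * (cmod (f (a * z + b)))\<^sup>2"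
      by (simp only: norm_mult power_mult_distrib norm_exp_sq)
    have r: "\<forall>x1 x2 x3 x4::real. x1 * s * ((x2 * x3) * (x4 / (pi * s))) = x2 * (x1 * (x3 * x4)) / pi"
      using s0 by simp
    have r2: "\<forall>x1 x2 x3::real. x1 * x2 * x3 / pi = x2 * (x1 * x3) / pi" by simp
    have "E * s * ((cmod (G (a * z + b)))\<^sup>2 * gw s ((a * z + b) - - \<mu>)) = (cmod (f (a * z + b)))\<^sup>2 * exp (X + (Y + Z)) / pi"
      unfolding g1 g2 E_def X_def[symmetric] exp_add using r by blast
    also have "\<dots> = (cmod (exp (cnj c * z) * f (a * z + b)))\<^sup>2 * exp (- (cmod z)\<^sup>2) / pi"
      unfolding l ex[symmetric] exp_add using r2 by metis
    finally show ?thesis by simp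
  qed
  define F where "F v = ennreal ((cmod (G v))\<^sup>2 * gw s (v - - \<mu>))" for v
  have Fm[measurable]: "F \<in> borel_measurable borel" unfolding F_def by measurable
  have E0: "E \<ge> 0" by (simp add: E_def)
  have "fock_nn (\<lambda>z. exp (cnj c * z) * f (a * z + b)) = (\<integral>\<^sup>+z. ennreal (E * s) * F (a * z + b) \<partial>lborel)"
    unfolding fock_nn_def F_def P2 using s0 E0
    by (intro nn_integral_cong) (subst ennreal_mult[symmetric], simp_all add: gw_nonneg mult.assoc)
  also have "\<dots> = ennreal (E * s) * ennreal (1 / (cmod a)\<^sup>2) * (\<integral>\<^sup>+v. F v \<partial>lborel)"
    by (simp add: nn_integral_cmult nn_integral_cplx_affine[OF Fm a0] mult.assoc)
  also have "ennreal (E * s) * ennreal (1 / (cmod a)\<^sup>2) = ennreal E"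
    using s0 E0 by (simp add: ennreal_mult[symmetric] s_def)
  also have "(\<integral>\<^sup>+v. F v \<partial>lborel) \<le> (\<integral>\<^sup>+v. ennreal ((cmod (G v))\<^sup>2 * gw 1 (v - - \<mu>)) \<partial>lborel)"
    unfolding F_def by (rule key[OF G s0 s1])
  also have "(\<integral>\<^sup>+v. ennreal ((cmod (G v))\<^sup>2 * gw 1 (v - - \<mu>)) \<partial>lborel) = ennreal (exp (- (cmod \<mu>)\<^sup>2)) * fock_nn f"
  proof -
    have "fock_nn f = (\<integral>\<^sup>+v. ennreal (exp ((cmod \<mu>)\<^sup>2)) * ennreal ((cmod (G v))\<^sup>2 * gw 1 (v - - \<mu>)) \<partial>lborel)"
      unfolding fock_nn_def P1 by (intro nn_integral_cong) (subst ennreal_mult[symmetric], simp_all add: gw_nonneg)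
    also have "\<dots> = ennreal (exp ((cmod \<mu>)\<^sup>2)) * (\<integral>\<^sup>+v. ennreal ((cmod (G v))\<^sup>2 * gw 1 (v - - \<mu>)) \<partial>lborel)"
      by (rule nn_integral_cmult) measurable
    finally have "ennreal (exp (- (cmod \<mu>)\<^sup>2)) * fock_nn f = ennreal (exp (- (cmod \<mu>)\<^sup>2)) * ennreal (exp ((cmod \<mu>)\<^sup>2)) * (\<integral>\<^sup>+v. ennreal ((cmod (G v))\<^sup>2 * gw 1 (v - - \<mu>)) \<partial>lborel)"
      by (simp add: mult.assoc)
    also have "ennreal (exp (- (cmod \<mu>)\<^sup>2)) * ennreal (exp ((cmod \<mu>)\<^sup>2)) = 1"
      by (simp add: ennreal_mult[symmetric] exp_add[symmetric] del: exp_add)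
    finally show ?thesis by simp
  qed
  finally have "fock_nn (\<lambda>z. exp (cnj c * z) * f (a * z + b)) \<le> ennreal E * (ennreal (exp (- (cmod \<mu>)\<^sup>2)) * fock_nn f)"
    by (simp add: mult_left_mono)
  also have "\<dots> = ennreal (exp ((cmod (c - cnj a * \<mu>))\<^sup>2 - 2 * Re (cnj \<mu> * b) - (cmod \<mu>)\<^sup>2)) * fock_nn f"
    by (simp add: E_def p_def mult.assoc[symmetric] ennreal_mult[symmetric] exp_add[symmetric] del: exp_add)
  finally show ?thesis .
qed


lemma fock_norm_kern: "fock_norm (\<lambda>z. C * exp (cnj p * z)) = sqrt ((cmod C)\<^sup>2 * exp ((cmod p)\<^sup>2))"
  by (simp add: fock_norm_def fock_nn_kern)

lemma unit_exponent:
  fixes a b c :: complex and t :: real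
  assumes a: "cmod a = 1"
  shows "2 * Re (cnj (of_real t * (b + a * c)) * b) + (cmod (c + cnj a * (of_real t * (b + a * c))))\<^sup>2 - (cmod (of_real t * (b + a * c)))\<^sup>2
       = (cmod c)\<^sup>2 + 2 * t * (cmod (b + a * c))\<^sup>2"
proof -
  have a2: "(Re a)\<^sup>2 + (Im a)\<^sup>2 = 1" using a by (simp add: cmod_power2 [symmetric])
  show ?thesis unfolding cmod_power2 using a2 by simp algebra
qed

lemma unit_c:
  fixes a b c :: complex
  assumes a: "cmod a = 1" and bd: "fock_bounded (wcomp (fock_kernel c) (\<lambda>z. a * z + b))"
  shows "b + a * c = 0"
proof (rule ccontr)
  assume nz: "b + a * c \<noteq> 0"
  define \<beta> where "\<beta> = b + a * c"
  obtain M where M: "\<And>f. f \<in> fock_space \<Longrightarrow> fock_norm (wcomp (fock_kernel c) (\<lambda>z. a * z + b) f) \<le> M * fock_norm f"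
    using bd unfolding fock_bounded_def by blast
  have ineq: "exp ((cmod c)\<^sup>2 + 2 * t * (cmod \<beta>)\<^sup>2) \<le> M\<^sup>2" for t :: real
  proof -
    define w where "w = of_real t * \<beta>"
    have "fock_norm (wcomp (fock_kernel c) (\<lambda>z. a * z + b) (\<lambda>z. 1 * exp (cnj w * z))) \<le> M * fock_norm (\<lambda>z. 1 * exp (cnj w * z))"
      by (rule M[OF kern_in_fock])
    also have "wcomp (fock_kernel c) (\<lambda>z. a * z + b) (\<lambda>z. 1 * exp (cnj w * z)) = (\<lambda>z. (1 * exp (cnj w * b)) * exp (cnj (c + cnj a * w) * z))"
      unfolding T_eq T_kern ..
    finally have "sqrt ((cmod (1 * exp (cnj w * b)))\<^sup>2 * exp ((cmod (c + cnj a * w))\<^sup>2)) \<le> M * sqrt ((cmod 1)\<^sup>2 * exp ((cmod w)\<^sup>2))"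
      by (simp only: fock_norm_kern)
    then have "sqrt (exp (2 * Re (cnj w * b)) * exp ((cmod (c + cnj a * w))\<^sup>2)) \<le> M * sqrt (exp ((cmod w)\<^sup>2))"
      by (simp only: mult_1_left norm_one power_one norm_exp_sq)
    then have "sqrt (exp (2 * Re (cnj w * b) + (cmod (c + cnj a * w))\<^sup>2)) \<le> M * sqrt (exp ((cmod w)\<^sup>2))"
      by (simp only: exp_add)
    then have "sqrt (exp (2 * Re (cnj w * b) + (cmod (c + cnj a * w))\<^sup>2 - (cmod w)\<^sup>2)) \<le> M"
      by (simp add: exp_diff real_sqrt_divide divide_le_eq del: exp_add mult_exp_exp)
    then have "exp (2 * Re (cnj w * b) + (cmod (c + cnj a * w))\<^sup>2 - (cmod w)\<^sup>2) \<le> M\<^sup>2"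
      by (rule sqrt_le_D)
    then show ?thesis
      unfolding w_def \<beta>_def unit_exponent[OF a] .
  qed
  have bpos: "(cmod \<beta>)\<^sup>2 > 0" using nz by (simp add: \<beta>_def)
  define t where "t = M\<^sup>2 / (2 * (cmod \<beta>)\<^sup>2)"
  have "exp ((cmod c)\<^sup>2 + 2 * t * (cmod \<beta>)\<^sup>2) \<le> M\<^sup>2" by (rule ineq)
  moreover have "2 * t * (cmod \<beta>)\<^sup>2 = M\<^sup>2" using bpos by (simp add: t_def)
  ultimately have "exp ((cmod c)\<^sup>2 + M\<^sup>2) \<le> M\<^sup>2" by simp
  moreover have "exp ((cmod c)\<^sup>2 + M\<^sup>2) > (cmod c)\<^sup>2 + M\<^sup>2"
    using exp_gt_self by blast
  ultimately show False using zero_le_power2[of "cmod c"] by linarith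
qed

lemma unit_eq:
  fixes a b c :: complex
  assumes a: "cmod a = 1" and c: "b + a * c = 0" and f: "f holomorphic_on UNIV"
  shows "fock_nn (\<lambda>z. exp (cnj c * z) * f (a * z + b)) = ennreal (exp ((cmod b)\<^sup>2)) * fock_nn f"
proof -
  have fm[measurable]: "f \<in> borel_measurable borel" by (rule fock_meas[OF f])
  have a0: "a \<noteq> 0" using a by auto
  have a2: "(Re a)\<^sup>2 + (Im a)\<^sup>2 = 1" using a by (simp add: cmod_power2 [symmetric])
  have ex: "2 * Re (cnj c * z) + - (cmod z)\<^sup>2 = (cmod b)\<^sup>2 + - (cmod (a * z + b))\<^sup>2" for z
  proof -
    have cre: "Re c * (Re a) - Im c * Im a = - Re b" "Re c * Im a + Im c * Re a = - Im b"
      using arg_cong[OF c, of Re] arg_cong[OF c, of Im] by (simp_all add: algebra_simps)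
    have "c = cnj a * (a * c)" using a2 by (simp add: complex_eq_iff cmod_power2 algebra_simps power2_eq_square) algebra
    also have "a * c = - b" using c by (simp add: eq_neg_iff_add_eq_0 add.commute)
    finally have cc: "c = - cnj a * b" by simp
    show ?thesis unfolding cc cmod_power2 using a2 by simp algebra
  qed
  have pt: "(cmod (exp (cnj c * z) * f (a * z + b)))\<^sup>2 * exp (- (cmod z)\<^sup>2) / pi
      = exp ((cmod b)\<^sup>2) * ((cmod (f (a * z + b)))\<^sup>2 * exp (- (cmod (a * z + b))\<^sup>2) / pi)" for z
  proof -
    have l: "(cmod (exp (cnj c * z) * f (a * z + b)))\<^sup>2 = exp (2 * Re (cnj c * z)) * (cmod (f (a * z + b)))\<^sup>2"
      by (simp only: norm_mult power_mult_distrib norm_exp_sq)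
    have r1: "\<forall>x1 x2 x3::real. x1 * x2 * x3 / pi = x2 * (x1 * x3) / pi" by simp
    have r2: "\<forall>x2 x4 x5::real. x2 * (x4 * x5) / pi = x4 * (x2 * x5 / pi)" by simp
    have "(cmod (exp (cnj c * z) * f (a * z + b)))\<^sup>2 * exp (- (cmod z)\<^sup>2) / pi
        = (cmod (f (a * z + b)))\<^sup>2 * exp (2 * Re (cnj c * z) + - (cmod z)\<^sup>2) / pi"
      unfolding l exp_add using r1 by blast
    also have "\<dots> = (cmod (f (a * z + b)))\<^sup>2 * exp ((cmod b)\<^sup>2 + - (cmod (a * z + b))\<^sup>2) / pi"
      by (simp only: ex)
    also have "\<dots> = exp ((cmod b)\<^sup>2) * ((cmod (f (a * z + b)))\<^sup>2 * exp (- (cmod (a * z + b))\<^sup>2) / pi)"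
      unfolding exp_add using r2 by blast
    finally show ?thesis .
  qed
  define F where "F v = ennreal ((cmod (f v))\<^sup>2 * exp (- (cmod v)\<^sup>2) / pi)" for v
  have Fm[measurable]: "F \<in> borel_measurable borel" unfolding F_def by measurable
  have "fock_nn (\<lambda>z. exp (cnj c * z) * f (a * z + b)) = (\<integral>\<^sup>+z. ennreal (exp ((cmod b)\<^sup>2)) * F (a * z + b) \<partial>lborel)"
    unfolding fock_nn_def pt F_def by (intro nn_integral_cong) (subst ennreal_mult[symmetric], simp_all)
  also have "\<dots> = ennreal (exp ((cmod b)\<^sup>2)) * (ennreal (1 / (cmod a)\<^sup>2) * (\<integral>\<^sup>+v. F v \<partial>lborel))"
    by (simp add: nn_integral_cmult nn_integral_cplx_affine[OF Fm a0])
  also have "\<dots> = ennreal (exp ((cmod b)\<^sup>2)) * fock_nn f"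
    by (simp add: a F_def fock_nn_def)
  finally show ?thesis .
qed


lemma sqrt_exp: "sqrt (exp x) = exp (x / 2)"
proof -
  have "(exp (x / 2))\<^sup>2 = exp x" by (simp add: power2_eq_square mult_exp_exp)
  then show ?thesis by (metis exp_ge_zero real_sqrt_abs abs_of_nonneg)
qed

lemma sqrt_exp2: "sqrt (exp (2 * x + y)) = exp x * exp ((1/2) * y)"
proof -
  have e: "(2 * x + y) / 2 = x + (1/2) * y" by simp
  show ?thesis by (subst sqrt_exp) (simp only: e exp_add)
qed

lemma unit_part:
  fixes a b c :: complex
  assumes a: "cmod a = 1" and bd: "fock_bounded (wcomp (fock_kernel c) (\<lambda>z. a * z + b))"
  shows "fock_op_norm (wcomp (fock_kernel c) (\<lambda>z. a * z + b)) = exp ((cmod b)\<^sup>2 / 2)"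
proof -
  have hc: "b + a * c = 0" by (rule unit_c[OF a bd])
  have cb: "cmod c = cmod b"
  proof -
    have "a * c = - b" using hc by (simp add: eq_neg_iff_add_eq_0 add.commute)
    then have "cmod a * cmod c = cmod b" by (metis norm_minus_cancel norm_mult)
    then show ?thesis using a by simp
  qed
  have up: "fock_nn (wcomp (fock_kernel c) (\<lambda>z. a * z + b) f) \<le> ennreal (exp ((cmod b)\<^sup>2)) * fock_nn f"
    if "f \<in> fock_space" for f
  proof -
    have f: "f holomorphic_on UNIV" using that by (simp add: fock_space_def)
    show ?thesis unfolding T_eq unit_eq[OF a hc f] by simp
  qed
  define f0 where "f0 = (\<lambda>z. 1 * exp (cnj 0 * z))"
  have f0F: "f0 \<in> fock_space" unfolding f0_def by (rule kern_in_fock)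
  have n0: "fock_nn f0 = 1" unfolding f0_def fock_nn_kern by simp
  have nT: "fock_nn (wcomp (fock_kernel c) (\<lambda>z. a * z + b) f0) = ennreal (exp ((cmod b)\<^sup>2))"
    unfolding T_eq f0_def T_kern fock_nn_kern by (simp add: cb)
  have "fock_op_norm (wcomp (fock_kernel c) (\<lambda>z. a * z + b)) = sqrt (exp ((cmod b)\<^sup>2))"
    by (rule opnorm_eq[where T="wcomp (fock_kernel c) (\<lambda>z. a * z + b)", OF _ up f0F n0 nT]) simp_all
  then show ?thesis by (simp add: sqrt_exp)
qed

lemma disc_part:
  fixes a b c :: complex
  assumes a1: "cmod a < 1"
  shows "fock_op_norm (wcomp (fock_kernel c) (\<lambda>z. a * z + b)) =
             cmod (exp (cnj c * b / (1 - a))) *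
             exp ((1/2) * ((cmod (c * (1 - a) / (cnj a - 1) + b))\<^sup>2 / (1 - (cmod a)\<^sup>2)))"
proof -
  define s where "s = (cmod a)\<^sup>2"
  define \<mu> where "\<mu> = - (b + a * c) / of_real (1 - s)"
  define V where "V = exp ((cmod (c - cnj a * \<mu>))\<^sup>2 - 2 * Re (cnj \<mu> * b) - (cmod \<mu>)\<^sup>2)"
  have s1: "s < 1" using a1 by (simp add: s_def power_less_one_iff abs_less_iff)
  have up: "fock_nn (wcomp (fock_kernel c) (\<lambda>z. a * z + b) f) \<le> ennreal V * fock_nn f"
    if "f \<in> fock_space" for f
  proof -
    have f: "f holomorphic_on UNIV" using that by (simp add: fock_space_def)
    show ?thesis
    proof (cases "a = 0")
      case True
      have mu0: "\<mu> = - b" using True by (simp add: \<mu>_def s_def)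
      have cm: "cnj \<mu> * b = - complex_of_real ((cmod b)\<^sup>2)"
        unfolding mu0 using complex_norm_square[of b] by (simp add: mult.commute)
      have rb: "Re (cnj \<mu> * b) = - (cmod b)\<^sup>2" by (simp add: cm)
      have nm: "cmod \<mu> = cmod b" by (simp add: mu0)
      have "V = exp ((cmod c)\<^sup>2 + (cmod b)\<^sup>2)"
        unfolding V_def rb nm using True by simp
      then show ?thesis unfolding T_eq using upper_a0[OF f, of c b] True by simp
    next
      case False
      show ?thesis unfolding T_eq V_def \<mu>_def s_def by (rule upper_main[OF f False a1])
    qed
  qed
  define w where "w = - \<mu>"
  define C where "C = complex_of_real (exp (- (cmod w)\<^sup>2 / 2))"
  define f0 where "f0 = (\<lambda>z. C * exp (cnj w * z))"
  have f0F: "f0 \<in> fock_space" unfolding f0_def by (rule kern_in_fock)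
  have C2: "(cmod C)\<^sup>2 = exp (- (cmod w)\<^sup>2)"
  proof -
    have "(cmod C)\<^sup>2 = (exp (- (cmod w)\<^sup>2 / 2))\<^sup>2" by (simp add: C_def)
    also have "\<dots> = exp (- (cmod w)\<^sup>2)" by (simp add: power2_eq_square mult_exp_exp)
    finally show ?thesis .
  qed
  have n0: "fock_nn f0 = 1" unfolding f0_def fock_nn_kern C2 by (simp add: exp_add[symmetric] del: exp_add)
  have nT: "fock_nn (wcomp (fock_kernel c) (\<lambda>z. a * z + b) f0) = ennreal V"
  proof -
    have "fock_nn (wcomp (fock_kernel c) (\<lambda>z. a * z + b) f0) = ennreal ((cmod (C * exp (cnj w * b)))\<^sup>2 * exp ((cmod (c + cnj a * w))\<^sup>2))"
      unfolding T_eq f0_def T_kern fock_nn_kern ..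
    also have "(cmod (C * exp (cnj w * b)))\<^sup>2 * exp ((cmod (c + cnj a * w))\<^sup>2) = exp (- (cmod w)\<^sup>2) * exp (2 * Re (cnj w * b)) * exp ((cmod (c + cnj a * w))\<^sup>2)"
      by (simp only: norm_mult power_mult_distrib C2 norm_exp_sq)
    also have "\<dots> = V"
      unfolding V_def w_def by (simp add: exp_add[symmetric] del: exp_add mult_exp_exp) (simp add: mult_exp_exp)
    finally show ?thesis .
  qed
  have "fock_op_norm (wcomp (fock_kernel c) (\<lambda>z. a * z + b)) = sqrt V"
    by (rule opnorm_eq[where T="wcomp (fock_kernel c) (\<lambda>z. a * z + b)", OF _ up f0F n0 nT]) (simp add: V_def)
  also have "V = exp ((cmod c)\<^sup>2 + (cmod (b + a * c))\<^sup>2 / (1 - s))"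
    unfolding V_def \<mu>_def by (subst alg_A[OF s_def s1]) simp
  also have "(cmod c)\<^sup>2 + (cmod (b + a * c))\<^sup>2 / (1 - s) = 2 * Re (cnj c * b / (1 - a)) + (cmod (c * (1 - a) / (cnj a - 1) + b))\<^sup>2 / (1 - s)"
    by (rule alg_B[OF s_def s1])
  also have "sqrt (exp (2 * Re (cnj c * b / (1 - a)) + (cmod (c * (1 - a) / (cnj a - 1) + b))\<^sup>2 / (1 - s)))
      = exp (Re (cnj c * b / (1 - a))) * exp ((1/2) * ((cmod (c * (1 - a) / (cnj a - 1) + b))\<^sup>2 / (1 - s)))"
    by (rule sqrt_exp2)
  finally show ?thesis by (simp add: s_def norm_exp_eq_Re)
qed

lemma re_unit:
  fixes a :: complex
  assumes a: "cmod a = 1" and a1: "a \<noteq> 1"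
  shows "cmod (exp (complex_of_real r / (1 - cnj a))) = exp (r / 2)"
proof -
  have a2: "(Re a)\<^sup>2 + (Im a)\<^sup>2 = 1" using a by (simp add: cmod_power2 [symmetric])
  have nre: "Re a \<noteq> 1"
  proof
    assume "Re a = 1"
    then have "Im a = 0" using a2 by simp
    with \<open>Re a = 1\<close> have "a = 1" by (simp add: complex_eq_iff)
    with a1 show False by simp
  qed
  have den: "(1 - Re a)\<^sup>2 + (Im a)\<^sup>2 = 2 * (1 - Re a)"
    using a2 by (simp add: power2_eq_square algebra_simps)
  have "Re (complex_of_real r / (1 - cnj a)) = r * (1 - Re a) / ((1 - Re a)\<^sup>2 + (Im a)\<^sup>2)"
    by (simp add: Re_divide power2_eq_square)
  also have "\<dots> = r * (1 - Re a) / (2 * (1 - Re a))" by (simp only: den)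
  also have "\<dots> = r / 2" using nre by (simp add: field_simps)
  finally show ?thesis by (simp add: norm_exp_eq_Re)
qed

theorem theorem4p2:
  fixes a b c :: complex
  assumes "cmod a \<le> 1"
    and "fock_bounded (wcomp (fock_kernel c) (\<lambda>z. a * z + b))"
  shows "(cmod a < 1 \<longrightarrow>
           fock_op_norm (wcomp (fock_kernel c) (\<lambda>z. a * z + b)) =
             cmod (exp (cnj c * b / (1 - a))) *
             exp ((1/2) * ((cmod (c * (1 - a) / (cnj a - 1) + b))\<^sup>2 / (1 - (cmod a)\<^sup>2))))
       \<and> (cmod a = 1 \<and> a \<noteq> 1 \<longrightarrow>
           fock_op_norm (wcomp (fock_kernel c) (\<lambda>z. a * z + b)) =
             cmod (exp (complex_of_real ((cmod b)\<^sup>2) / (1 - cnj a))))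
       \<and> (a = 1 \<longrightarrow>
           fock_op_norm (wcomp (fock_kernel c) (\<lambda>z. a * z + b)) = exp ((cmod b)\<^sup>2 / 2))"
  using disc_part[where a=a and b=b and c=c] unit_part[where a=a and b=b and c=c, OF _ assms(2)]
    re_unit[where a=a and r="(cmod b)\<^sup>2"] by auto


end
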